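(* Let $\mathbb I$ be an index coding problem which admits a valid scalar linear index code of length $3$ over a finite field $\mathbb F$. Then for every type-2 alignment set of $\mathbb I$ with message set ${\cal W}'$, the restricted problem ${\mathbb I}_{{\cal W}'}$ admits a valid scalar linear index code of length $2$ over $\mathbb F$, and there are no ${\cal W}'$-restricted internal conflicts.
   Context: Index coding setup: An index coding problem $\mathbb I$ over a finite field $\mathbb F$ consists of a set of messages ${\cal W}=\{W_1,\dots,W_n\}$ (each message is a symbol of $\mathbb F$ in the scalar setting), a set of receivers $[1:T]$, and for each receiver $j$ a demand set $D(j)\subseteq{\cal W}$ and a side-information set $S(j)\subseteq {\cal W}\setminus D(j)$. Every message is demanded by at least one receiver. For a receiver $j$ and $W_k\in D(j)$, the interfering set is $Interf_k(j)={\cal W}\setminus(\{W_k\}\cup S(j))$; if $W_k\notin D(j)$ then $Interf_k(j)=\emptyset$. A scalar linear index code of length $L$ over $\mathbb F$ is an assignment of vectors $V_1,\dots,V_n\in\mathbb F^L$ to the messages; the source broadcasts $\sum_{i=1}^n V_iW_i\in\mathbb F^L$, and the code is valid if every receiver $j$ can recover every message of $D(j)$ from the broadcast codeword and the messages in $S(j)$. Two distinct messages $W_i,W_k$ are in conflict if there is a receiver $j$ with $W_k\in D(j)$ and $W_i\in Interf_k(j)$, or a receiver $j$ with $W_i\in D(j)$ and $W_k\in Interf_i(j)$. Alignment graph: the graph with vertex set ${\cal W}$ in which distinct $W_a,W_b$ are adjacent if there exist a receiver $j$ and a message $W_k\in D(j)$ with $W_k\notin\{W_a,W_b\}$ and $W_a,W_b\notin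 S(j)$. An alignment set is the vertex set of a connected component of the alignment graph. An internal conflict is a conflict between two messages lying in the same alignment set. A triangular interfering set is a subset ${\cal W}''\subseteq{\cal W}$ with $|{\cal W}''|=3$ such that there exist a receiver $j$ and a message $W_k\in D(j)\setminus{\cal W}''$ with ${\cal W}''\subseteq Interf_k(j)$, and at least two messages of ${\cal W}''$ are in conflict. Two distinct triangular interfering sets ${\cal W}_1,{\cal W}_2$ are adjacent if ${\cal W}_1\cap{\cal W}_2=\{W_a,W_b\}$ with $W_a,W_b$ in conflict. Two triangular interfering sets are connected if there is a finite sequence of triangular interfering sets starting at one and ending at the other in which consecutive sets are adjacent (every set is connected to itself). A type-2 alignment set is a maximal collection of pairwise connected triangular interfering sets (an equivalence class under connectedness); its message set is the union of its triangular interfering sets. Restricted problem: for ${\cal W}'\subseteq{\cal W}$, the ${\cal W}'$-restricted index coding problem ${\mathbb I}_{{\cal W}'}$ has message set ${\cal W}'$, receivers the receivers $j$ of $\mathbb I$ with $D(j)\cap{\cal W}'\neq\emptyset$, and for each such $j$ demand set $D(j)\cap{\cal W}'$ and side-information set $S(j)\cap{\cal W}'$. The ${\cal W}'$-restricted alignment sets and internal conflicts are the alignment sets and internal conflicts of ${\mathbb I}_{{\cal W}'}$ (conflicts being computed in ${\mathbb I}_{{\cal W}'}$). *)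

theory Defs
  imports Main
begin

definition ic_problem :: "'m set \<Rightarrow> 'r set \<Rightarrow> ('r \<Rightarrow> 'm set) \<Rightarrow> ('r \<Rightarrow> 'm set) \<Rightarrow> bool" where
  "ic_problem W R D S \<longleftrightarrow> finite W \<and> finite R \<and>
     (\<forall>j\<in>R. D j \<subseteq> W \<and> S j \<subseteq> W - D j) \<and>
     (\<forall>k\<in>W. \<exists>j\<in>R. k \<in> D j)"

text \<open>Broadcast codeword of a scalar linear code V of length L (vectors in F^L are
  functions nat => F, only coordinates below L matter).\<close>
definition codeword :: "'m set \<Rightarrow> nat \<Rightarrow> ('m \<Rightarrow> nat \<Rightarrow> 'f::field) \<Rightarrow> ('m \<Rightarrow> 'f) \<Rightarrow> nat \<Rightarrow> 'f" where
  "codeword W L V w = (\<lambda>l. if l < L then (\<Sum>i\<in>W. w i * V i l) else 0)"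

definition valid_linear_code ::
  "'m set \<Rightarrow> 'r set \<Rightarrow> ('r \<Rightarrow> 'm set) \<Rightarrow> ('r \<Rightarrow> 'm set) \<Rightarrow> nat \<Rightarrow> ('m \<Rightarrow> nat \<Rightarrow> 'f::field) \<Rightarrow> bool" where
  "valid_linear_code W R D S L V \<longleftrightarrow>
     (\<forall>j\<in>R. \<forall>k\<in>D j. \<exists>g. \<forall>w::'m \<Rightarrow> 'f.
        g (codeword W L V w) (\<lambda>i. if i \<in> S j then w i else 0) = w k)"

definition interf :: "'m set \<Rightarrow> ('r \<Rightarrow> 'm set) \<Rightarrow> ('r \<Rightarrow> 'm set) \<Rightarrow> 'r \<Rightarrow> 'm \<Rightarrow> 'm set" where
  "interf W D S j k = (if k \<in> D j then W - ({k} \<union> S j) else {})"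

definition in_conflict ::
  "'m set \<Rightarrow> 'r set \<Rightarrow> ('r \<Rightarrow> 'm set) \<Rightarrow> ('r \<Rightarrow> 'm set) \<Rightarrow> 'm \<Rightarrow> 'm \<Rightarrow> bool" where
  "in_conflict W R D S a b \<longleftrightarrow> a \<noteq> b \<and>
     ((\<exists>j\<in>R. b \<in> D j \<and> a \<in> interf W D S j b) \<or> (\<exists>j\<in>R. a \<in> D j \<and> b \<in> interf W D S j a))"

definition align_adj ::
  "'m set \<Rightarrow> 'r set \<Rightarrow> ('r \<Rightarrow> 'm set) \<Rightarrow> ('r \<Rightarrow> 'm set) \<Rightarrow> ('m \<times> 'm) set" where
  "align_adj W R D S = {(a, b). a \<in> W \<and> b \<in> W \<and> a \<noteq> b \<and>
     (\<exists>j\<in>R. \<exists>k\<in>D j. k \<notin> {a, b} \<and> a \<notin> S j \<and> b \<notin> S j)}"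

definition same_alignment_set ::
  "'m set \<Rightarrow> 'r set \<Rightarrow> ('r \<Rightarrow> 'm set) \<Rightarrow> ('r \<Rightarrow> 'm set) \<Rightarrow> 'm \<Rightarrow> 'm \<Rightarrow> bool" where
  "same_alignment_set W R D S a b \<longleftrightarrow> a \<in> W \<and> b \<in> W \<and> (a, b) \<in> (align_adj W R D S)\<^sup>*"

definition internal_conflict ::
  "'m set \<Rightarrow> 'r set \<Rightarrow> ('r \<Rightarrow> 'm set) \<Rightarrow> ('r \<Rightarrow> 'm set) \<Rightarrow> 'm \<Rightarrow> 'm \<Rightarrow> bool" where
  "internal_conflict W R D S a b \<longleftrightarrow> in_conflict W R D S a b \<and> same_alignment_set W R D S a b"

definition triangular_interfering ::
  "'m set \<Rightarrow> 'r set \<Rightarrow> ('r \<Rightarrow> 'm set) \<Rightarrow> ('r \<Rightarrow> 'm set) \<Rightarrow> 'm set \<Rightarrow> bool" where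
  "triangular_interfering W R D S T \<longleftrightarrow> T \<subseteq> W \<and> card T = 3 \<and>
     (\<exists>j\<in>R. \<exists>k\<in>D j - T. T \<subseteq> interf W D S j k) \<and>
     (\<exists>a\<in>T. \<exists>b\<in>T. in_conflict W R D S a b)"

definition tri_adj ::
  "'m set \<Rightarrow> 'r set \<Rightarrow> ('r \<Rightarrow> 'm set) \<Rightarrow> ('r \<Rightarrow> 'm set) \<Rightarrow> ('m set \<times> 'm set) set" where
  "tri_adj W R D S = {(T1, T2). triangular_interfering W R D S T1 \<and> triangular_interfering W R D S T2 \<and>
     T1 \<noteq> T2 \<and> (\<exists>a b. T1 \<inter> T2 = {a, b} \<and> in_conflict W R D S a b)}"

definition type2_alignment_set ::
  "'m set \<Rightarrow> 'r set \<Rightarrow> ('r \<Rightarrow> 'm set) \<Rightarrow> ('r \<Rightarrow> 'm set) \<Rightarrow> 'm set set \<Rightarrow> bool" where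
  "type2_alignment_set W R D S C \<longleftrightarrow>
     (\<exists>T0. triangular_interfering W R D S T0 \<and> C = {T. (T0, T) \<in> (tri_adj W R D S)\<^sup>*})"

definition restr_receivers :: "'m set \<Rightarrow> 'r set \<Rightarrow> ('r \<Rightarrow> 'm set) \<Rightarrow> 'r set" where
  "restr_receivers W' R D = {j \<in> R. D j \<inter> W' \<noteq> {}}"

definition restr_map :: "'m set \<Rightarrow> ('r \<Rightarrow> 'm set) \<Rightarrow> 'r \<Rightarrow> 'm set" where
  "restr_map W' X = (\<lambda>j. X j \<inter> W')"

end

theory Submission
  imports Defs
begin

definition dot3 :: "(nat \<Rightarrow> 'f::field) \<Rightarrow> (nat \<Rightarrow> 'f) \<Rightarrow> 'f" where
  "dot3 x y = x 0 * y 0 + x 1 * y 1 + x 2 * y 2"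
definition cr :: "(nat \<Rightarrow> 'f::field) \<Rightarrow> (nat \<Rightarrow> 'f) \<Rightarrow> nat \<Rightarrow> 'f" where
  "cr x y = (\<lambda>l. if l = 0 then x 1 * y 2 - x 2 * y 1 else if l = 1 then x 2 * y 0 - x 0 * y 2
      else x 0 * y 1 - x 1 * y 0)"

lemma all3: "(\<forall>l<(3::nat). P l) \<longleftrightarrow> P 0 \<and> P 1 \<and> P 2"
  by (auto simp: eval_nat_numeral less_Suc_eq)
lemma ex3: "P 0 \<or> P 1 \<or> P (2::nat) \<Longrightarrow> \<exists>m<3. P m"
  using all3[of "\<lambda>m. \<not> P m"] by blast

lemma all2: "(\<forall>l<(2::nat). P l) \<longleftrightarrow> P 0 \<and> P 1"
  by (auto simp: eval_nat_numeral less_Suc_eq)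

lemma ex2: "P 0 \<or> P (1::nat) \<Longrightarrow> \<exists>m<2. P m"
  using all2[of "\<lambda>m. \<not> P m"] by blast

lemma ident4: "dot3 (cr b c) k * a l - dot3 (cr a c) k * b l + dot3 (cr a b) k * c l
   - dot3 (cr a b) c * k l = (0::'f::field)" if "l < 3"
proof -
  have "l = 0 \<or> l = 1 \<or> l = 2" using that by auto
  then show ?thesis by (auto simp: dot3_def cr_def algebra_simps)
qed

lemma lemD:
  fixes n a b c :: "nat \<Rightarrow> 'f::field" and m :: nat
  assumes "dot3 n a = 0" "dot3 n b = 0" "dot3 (cr a b) c = 0" "cr a b m \<noteq> 0"
  shows "dot3 n c = 0"
proof -
  have h: "a 0 * n 0 + a 1 * n 1 + a 2 * n 2 = 0" "b 0 * n 0 + b 1 * n 1 + b 2 * n 2 = 0"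
    "(a 1 * b 2 - a 2 * b 1) * c 0 + (a 2 * b 0 - a 0 * b 2) * c 1 + (a 0 * b 1 - a 1 * b 0) * c 2 = 0"
    using assms(1-3) by (simp_all add: dot3_def cr_def algebra_simps)
  have e0: "(a 1 * b 2 - a 2 * b 1) * (n 0 * c 0 + n 1 * c 1 + n 2 * c 2) = 0" using h by algebra
  have e1: "(a 2 * b 0 - a 0 * b 2) * (n 0 * c 0 + n 1 * c 1 + n 2 * c 2) = 0" using h by algebra
  have e2: "(a 0 * b 1 - a 1 * b 0) * (n 0 * c 0 + n 1 * c 1 + n 2 * c 2) = 0" using h by algebra
  have "cr a b m * dot3 n c = 0"
    using e0 e1 e2 unfolding cr_def dot3_def by auto
  thus ?thesis using assms(4) by simp
qed

definition det2 :: "(nat \<Rightarrow> 'f::field) \<Rightarrow> (nat \<Rightarrow> 'f) \<Rightarrow> 'f" where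
  "det2 x y = x 0 * y 1 - x 1 * y 0"

lemma sum_supp: "finite A \<Longrightarrow> B \<subseteq> A \<Longrightarrow> (\<forall>i\<in>A-B. w i = 0) \<Longrightarrow>
   (\<Sum>i\<in>A. w i * f i) = (\<Sum>i\<in>B. w i * (f i :: 'f::field))"
  by (rule sum.mono_neutral_right) auto

lemma dec:
  fixes V :: "'m \<Rightarrow> nat \<Rightarrow> 'f::field" and w :: "'m \<Rightarrow> 'f"
  assumes "valid_linear_code W R D S L V" "j\<in>R" "k\<in>D j" "\<forall>i\<in>S j. w i = 0"
    "\<forall>l<L. (\<Sum>i\<in>W. w i * V i l) = 0"
  shows "w k = 0"
proof -
  obtain g where g: "\<forall>u::'m\<Rightarrow>'f. g (codeword W L V u) (\<lambda>i. if i \<in> S j then u i else 0) = u k"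
    using assms(1-3) unfolding valid_linear_code_def by blast
  have c: "codeword W L V w = codeword W L V (\<lambda>_. 0)" unfolding codeword_def using assms(5) by auto
  have s: "(\<lambda>i. if i \<in> S j then w i else 0) = (\<lambda>i. if i \<in> S j then (\<lambda>_. 0::'f) i else 0)"
    using assms(4) by auto
  from g[rule_format, of w] g[rule_format, of "\<lambda>_. 0"] c s show ?thesis by simp
qed

lemma valid_intro:
  fixes V :: "'m \<Rightarrow> nat \<Rightarrow> 'f::field"
  assumes fin: "finite W" and H: "\<forall>j\<in>R. \<forall>k\<in>D j. \<forall>w::'m\<Rightarrow>'f. (\<forall>i\<in>S j. w i = 0) \<longrightarrow>
      (\<forall>l<L. (\<Sum>i\<in>W. w i * V i l) = 0) \<longrightarrow> w k = 0"
  shows "valid_linear_code W R D S L V"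
  unfolding valid_linear_code_def
proof (intro ballI)
  fix j k assume j: "j\<in>R" and k: "k\<in>D j"
  show "\<exists>g. \<forall>w::'m \<Rightarrow> 'f. g (codeword W L V w) (\<lambda>i. if i \<in> S j then w i else 0) = w k"
  proof (intro exI allI)
    fix w :: "'m \<Rightarrow> 'f"
    let ?P = "\<lambda>u. codeword W L V u = codeword W L V w \<and>
       (\<lambda>i. if i \<in> S j then u i else 0) = (\<lambda>i. if i \<in> S j then w i else 0)"
    define u where "u = (SOME u. ?P u)"
    have Pu: "?P u" unfolding u_def by (rule someI[of ?P w]) simp
    define d where "d = (\<lambda>i. w i - u i)"
    have d1: "\<forall>i\<in>S j. d i = 0"
    proof
      fix i assume "i \<in> S j"
      with fun_cong[OF conjunct2[OF Pu], of i] show "d i = 0" by (simp add: d_def)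
    qed
    have d2: "\<forall>l<L. (\<Sum>i\<in>W. d i * V i l) = 0"
    proof (intro allI impI)
      fix l assume "l < L"
      with fun_cong[OF conjunct1[OF Pu], of l]
      have "(\<Sum>i\<in>W. u i * V i l) = (\<Sum>i\<in>W. w i * V i l)" by (simp add: codeword_def)
      thus "(\<Sum>i\<in>W. d i * V i l) = 0" by (simp add: d_def left_diff_distrib sum_subtractf)
    qed
    have "d k = 0" using H j k d1 d2 by blast
    hence "u k = w k" by (simp add: d_def)
    thus "(\<lambda>c s. (SOME u. codeword W L V u = c \<and> (\<lambda>i. if i \<in> S j then u i else 0) = s) k)
        (codeword W L V w) (\<lambda>i. if i \<in> S j then w i else 0) = w k"
      by (simp add: u_def)
  qed
qed

lemma no_ic:
  fixes V2 :: "'m \<Rightarrow> nat \<Rightarrow> 'f::field"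
  assumes fin: "finite W" and val: "valid_linear_code W R D S 2 V2"
    and DS: "\<forall>j\<in>R. D j \<subseteq> W \<and> D j \<inter> S j = {}" and dem: "\<forall>x\<in>W. \<exists>j\<in>R. x \<in> D j"
  shows "\<not> internal_conflict W R D S a b"
proof
  have nz: "V2 x 0 \<noteq> 0 \<or> V2 x 1 \<noteq> 0" if x: "x \<in> W" for x
  proof (rule ccontr)
    assume z: "\<not> (V2 x 0 \<noteq> 0 \<or> V2 x 1 \<noteq> 0)"
    obtain j where j: "j \<in> R" "x \<in> D j" using dem x by blast
    have xS: "x \<notin> S j" using DS j by blast
    define w where "w = (\<lambda>i. if i = x then 1 else (0::'f))"
    have s: "(\<Sum>i\<in>W. w i * V2 i l) = V2 x l" for l
      using sum_supp[OF fin, of "{x}" w] x by (simp add: w_def)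
    have "w x = 0"
      by (rule dec[OF val j]) (use xS z s in \<open>auto simp: w_def all2\<close>)
    thus False by (simp add: w_def)
  qed
  have edge: "det2 (V2 x) (V2 y) = 0" if e: "(x, y) \<in> align_adj W R D S" for x y
  proof -
    obtain j k where jk: "j \<in> R" "k \<in> D j" "k \<noteq> x" "k \<noteq> y" "x \<notin> S j" "y \<notin> S j"
      and xy: "x \<in> W" "y \<in> W" "x \<noteq> y"
      using e unfolding align_adj_def by blast
    have kW: "k \<in> W" "k \<notin> S j" using DS jk by blast+
    define w where "w = (\<lambda>i. if i = x then det2 (V2 y) (V2 k) else if i = y then - det2 (V2 x) (V2 k)
       else if i = k then det2 (V2 x) (V2 y) else 0)"
    have s: "(\<Sum>i\<in>W. w i * V2 i l) = w x * V2 x l + w y * V2 y l + w k * V2 k l" for l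
      using sum_supp[OF fin, of "{x,y,k}" w] xy kW jk by (simp add: w_def)
    have "w k = 0"
    proof (rule dec[OF val jk(1,2)])
      show "\<forall>i\<in>S j. w i = 0" using jk kW by (auto simp: w_def)
      show "\<forall>l<2. (\<Sum>i\<in>W. w i * V2 i l) = 0"
      proof (intro allI impI)
        fix l :: nat assume "l < 2"
        have "w x * V2 x l + w y * V2 y l + w k * V2 k l = 0"
        proof -
          have "l = 0 \<or> l = 1" using \<open>l < 2\<close> by auto
          hence id: "det2 (V2 y) (V2 k) * V2 x l + - det2 (V2 x) (V2 k) * V2 y l
              + det2 (V2 x) (V2 y) * V2 k l = 0" by (auto simp: det2_def algebra_simps)
          have "w x = det2 (V2 y) (V2 k)" "w y = - det2 (V2 x) (V2 k)" "w k = det2 (V2 x) (V2 y)"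
            using jk xy by (simp_all add: w_def)
          thus ?thesis using id by simp
        qed
        thus "(\<Sum>i\<in>W. w i * V2 i l) = 0" unfolding s .
      qed
    qed
    thus ?thesis using jk by (simp add: w_def)
  qed
  have conf1: "det2 (V2 a) (V2 b) \<noteq> 0" if j: "j \<in> R" "b \<in> D j" "a \<in> interf W D S j b" for a b j
  proof
    assume d0: "det2 (V2 a) (V2 b) = 0"
    have a: "a \<in> W" "a \<noteq> b" "a \<notin> S j" using j unfolding interf_def by auto
    have bW: "b \<in> W" "b \<notin> S j" using DS j by blast+
    obtain m where m: "m < 2" "V2 a m \<noteq> 0" using ex2[OF nz[OF a(1)]] by blast
    define w where "w = (\<lambda>i. if i = a then V2 b m else if i = b then - V2 a m else 0)"
    have s: "(\<Sum>i\<in>W. w i * V2 i l) = w a * V2 a l + w b * V2 b l" for l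
      using sum_supp[OF fin, of "{a,b}" w] a bW by (simp add: w_def)
    have ml: "V2 b m * V2 a l - V2 a m * V2 b l = 0" if "l < 2" for l
    proof -
      have "l = 0 \<or> l = 1" "m = 0 \<or> m = 1" using that m by auto
      thus ?thesis using d0 by (auto simp: det2_def algebra_simps)
    qed
    have "w b = 0"
      by (rule dec[OF val j(1,2)]) (use a bW s ml in \<open>auto simp: w_def\<close>)
    thus False using a m by (simp add: w_def)
  qed
  have conf: "det2 (V2 a) (V2 b) \<noteq> 0" if "in_conflict W R D S a b" for a b
  proof -
    have anti: "det2 (V2 b) (V2 a) = - det2 (V2 a) (V2 b)" by (simp add: det2_def)
    from that show ?thesis unfolding in_conflict_def using conf1 anti by force
  qed
  assume ic: "internal_conflict W R D S a b"
  hence aW: "a \<in> W" and rt: "(a, b) \<in> (align_adj W R D S)\<^sup>*"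
    unfolding internal_conflict_def same_alignment_set_def by auto
  have "det2 (V2 a) (V2 b) = 0" using rt
  proof (induction rule: rtrancl_induct)
    case base thus ?case by (simp add: det2_def)
  next
    case (step y z)
    have yW: "y \<in> W" using step(2) unfolding align_adj_def by auto
    have e: "det2 (V2 y) (V2 z) = 0" using edge step(2) by blast
    have i0: "det2 (V2 a) (V2 z) * V2 y 0 = det2 (V2 y) (V2 z) * V2 a 0 + det2 (V2 a) (V2 y) * V2 z 0"
      and i1: "det2 (V2 a) (V2 z) * V2 y 1 = det2 (V2 y) (V2 z) * V2 a 1 + det2 (V2 a) (V2 y) * V2 z 1"
      by (simp_all add: det2_def algebra_simps)
    show ?case using nz[OF yW] i0 i1 e step(3) by auto
  qed
  thus False using conf ic unfolding internal_conflict_def by blast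
qed

lemma par3:
  fixes x y :: "nat \<Rightarrow> 'f::field"
  assumes "x 1 * y 2 - x 2 * y 1 = 0" "x 2 * y 0 - x 0 * y 2 = 0" "x 0 * y 1 - x 1 * y 0 = 0"
  shows
    "y 0 * x 0 - x 0 * y 0 = 0"
    "y 0 * x 1 - x 0 * y 1 = 0"
    "y 0 * x 2 - x 0 * y 2 = 0"
    "y 1 * x 0 - x 1 * y 0 = 0"
    "y 1 * x 1 - x 1 * y 1 = 0"
    "y 1 * x 2 - x 1 * y 2 = 0"
    "y 2 * x 0 - x 2 * y 0 = 0"
    "y 2 * x 1 - x 2 * y 1 = 0"
    "y 2 * x 2 - x 2 * y 2 = 0"
  using assms by (simp_all add: algebra_simps)

lemma nz3:
  fixes V :: "'m \<Rightarrow> nat \<Rightarrow> 'f::field"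
  assumes ic: "ic_problem W R D S" and val: "valid_linear_code W R D S 3 V" and x: "x \<in> W"
  shows "V x 0 \<noteq> 0 \<or> V x 1 \<noteq> 0 \<or> V x 2 \<noteq> 0"
proof (rule ccontr)
  assume z: "\<not> (V x 0 \<noteq> 0 \<or> V x 1 \<noteq> 0 \<or> V x 2 \<noteq> 0)"
  have fin: "finite W" using ic unfolding ic_problem_def by auto
  obtain j where j: "j \<in> R" "x \<in> D j" using ic x unfolding ic_problem_def by blast
  have xS: "x \<notin> S j" using ic j unfolding ic_problem_def by blast
  define w where "w = (\<lambda>i. if i = x then 1 else (0::'f))"
  have s: "(\<Sum>i\<in>W. w i * V i l) = V x l" for l
    using sum_supp[OF fin, of "{x}" w] x by (simp add: w_def)
  have "w x = 0"
    by (rule dec[OF val j]) (use xS z s in \<open>auto simp: w_def all3\<close>)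
  thus False by (simp add: w_def)
qed

lemma conf3a:
  fixes V :: "'m \<Rightarrow> nat \<Rightarrow> 'f::field"
  assumes ic: "ic_problem W R D S" and val: "valid_linear_code W R D S 3 V"
    and j: "j \<in> R" "b \<in> D j" "a \<in> interf W D S j b"
  shows "cr (V a) (V b) 0 \<noteq> 0 \<or> cr (V a) (V b) 1 \<noteq> 0 \<or> cr (V a) (V b) 2 \<noteq> 0"
proof (rule ccontr)
  assume d0: "\<not> ?thesis"
  have fin: "finite W" using ic unfolding ic_problem_def by auto
  have a: "a \<in> W" "a \<noteq> b" "a \<notin> S j" using j unfolding interf_def by auto
  have bW: "b \<in> W" "b \<notin> S j" using ic j unfolding ic_problem_def by blast+
  obtain m where m: "m < 3" "V a m \<noteq> 0" using ex3[OF nz3[OF ic val a(1)]] by blast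
  define w where "w = (\<lambda>i. if i = a then V b m else if i = b then - V a m else 0)"
  have s: "(\<Sum>i\<in>W. w i * V i l) = w a * V a l + w b * V b l" for l
    using sum_supp[OF fin, of "{a,b}" w] a bW by (simp add: w_def)
  have ml: "V b m * V a l - V a m * V b l = 0" if "l < 3" for l
  proof -
    have e: "V a 1 * V b 2 - V a 2 * V b 1 = 0" "V a 2 * V b 0 - V a 0 * V b 2 = 0"
      "V a 0 * V b 1 - V a 1 * V b 0 = 0" using d0 by (simp_all add: cr_def)
    note f = par3[OF e]
    have "l = 0 \<or> l = 1 \<or> l = 2" "m = 0 \<or> m = 1 \<or> m = 2" using that m by auto
    thus ?thesis using f by auto
  qed
  have "w b = 0"
    by (rule dec[OF val j(1,2)]) (use a bW s ml in \<open>auto simp: w_def\<close>)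
  thus False using a m by (simp add: w_def)
qed

lemma conf3:
  fixes V :: "'m \<Rightarrow> nat \<Rightarrow> 'f::field"
  assumes ic: "ic_problem W R D S" and val: "valid_linear_code W R D S 3 V"
    and c: "in_conflict W R D S a b"
  shows "\<exists>m<3. cr (V a) (V b) m \<noteq> 0"
proof -
  have anti: "cr (V b) (V a) l = - cr (V a) (V b) l" for l by (simp add: cr_def)
  from c consider (1) j where "j \<in> R" "b \<in> D j" "a \<in> interf W D S j b"
    | (2) j where "j \<in> R" "a \<in> D j" "b \<in> interf W D S j a"
    unfolding in_conflict_def by blast
  thus ?thesis
  proof cases
    case 1 show ?thesis using ex3[of "\<lambda>m. cr (V a) (V b) m \<noteq> 0", OF conf3a[OF ic val 1]] .
  next
    case 2
    have "cr (V b) (V a) 0 \<noteq> 0 \<or> cr (V b) (V a) 1 \<noteq> 0 \<or> cr (V b) (V a) 2 \<noteq> 0"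
      using conf3a[OF ic val 2] .
    hence "cr (V a) (V b) 0 \<noteq> 0 \<or> cr (V a) (V b) 1 \<noteq> 0 \<or> cr (V a) (V b) 2 \<noteq> 0"
      using anti[of 0] anti[of 1] anti[of 2] by simp
    thus ?thesis using ex3[of "\<lambda>m. cr (V a) (V b) m \<noteq> 0"] by simp
  qed
qed

lemma tri3:
  fixes V :: "'m \<Rightarrow> nat \<Rightarrow> 'f::field"
  assumes ic: "ic_problem W R D S" and val: "valid_linear_code W R D S 3 V"
    and j: "j \<in> R" "k \<in> D j" and T: "{a,b,c} \<subseteq> interf W D S j k"
    and dist: "a \<noteq> b" "a \<noteq> c" "b \<noteq> c" and kT: "k \<notin> {a,b,c}"
  shows "dot3 (cr (V a) (V b)) (V c) = 0"
proof -
  have fin: "finite W" using ic unfolding ic_problem_def by auto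
  have abc: "a \<in> W" "b \<in> W" "c \<in> W" "a \<notin> S j" "b \<notin> S j" "c \<notin> S j"
    using T j unfolding interf_def by auto
  have kW: "k \<in> W" "k \<notin> S j" using ic j unfolding ic_problem_def by blast+
  define w where "w = (\<lambda>i. if i = a then dot3 (cr (V b) (V c)) (V k)
     else if i = b then - dot3 (cr (V a) (V c)) (V k)
     else if i = c then dot3 (cr (V a) (V b)) (V k)
     else if i = k then - dot3 (cr (V a) (V b)) (V c) else 0)"
  have s: "(\<Sum>i\<in>W. w i * V i l) = w a * V a l + w b * V b l + w c * V c l + w k * V k l" for l
  proof -
    have "(\<Sum>i\<in>W. w i * V i l) = (\<Sum>i\<in>{a,b,c,k}. w i * V i l)"
      by (rule sum_supp[OF fin]) (use abc kW in \<open>auto simp: w_def\<close>)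
    also have "\<dots> = w a * V a l + w b * V b l + w c * V c l + w k * V k l"
    proof -
      have "a \<noteq> k" "b \<noteq> k" "c \<noteq> k" using kT by auto
      thus ?thesis using dist by (simp add: algebra_simps)
    qed
    finally show ?thesis .
  qed
  have "w k = 0"
  proof (rule dec[OF val j])
    show "\<forall>i\<in>S j. w i = 0" using abc kW by (auto simp: w_def)
    show "\<forall>l<3. (\<Sum>i\<in>W. w i * V i l) = 0"
    proof (intro allI impI)
      fix l :: nat assume "l < 3"
      have "dot3 (cr (V b) (V c)) (V k) * V a l - dot3 (cr (V a) (V c)) (V k) * V b l
         + dot3 (cr (V a) (V b)) (V k) * V c l - dot3 (cr (V a) (V b)) (V c) * V k l = 0"
        by (rule ident4) fact
      moreover have "w a = dot3 (cr (V b) (V c)) (V k)" "w b = - dot3 (cr (V a) (V c)) (V k)"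
        "w c = dot3 (cr (V a) (V b)) (V k)" "w k = - dot3 (cr (V a) (V b)) (V c)"
        using dist kT by (auto simp: w_def)
      ultimately show "(\<Sum>i\<in>W. w i * V i l) = 0" unfolding s by simp
    qed
  qed
  moreover have "w k = - dot3 (cr (V a) (V b)) (V c)" using kT by (auto simp: w_def)
  ultimately show ?thesis by simp
qed

lemma card3E:
  assumes "card T = 3" "p \<in> T" "q \<in> T" "p \<noteq> q"
  obtains c where "c \<noteq> p" "c \<noteq> q" "T = {p, q, c}"
proof -
  have fT: "finite T" using assms(1) by (metis card.infinite zero_neq_numeral)
  have "card (T - {p, q}) = 1" using assms fT by (simp add: card_Diff_subset)
  then obtain c where c: "T - {p, q} = {c}" by (metis card_1_singletonE)
  hence "T = {p, q, c}" "c \<noteq> p" "c \<noteq> q" using assms by auto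
  thus ?thesis using that by blast
qed

theorem theorem6:
  fixes W :: "'m set" and R :: "'r set" and D S :: "'r \<Rightarrow> 'm set"
    and V :: "'m \<Rightarrow> nat \<Rightarrow> 'f::{field, finite}"
  assumes "ic_problem W R D S"
    and "valid_linear_code W R D S 3 V"
    and "type2_alignment_set W R D S C"
    and "W' = \<Union>C"
  shows "(\<exists>V2 :: 'm \<Rightarrow> nat \<Rightarrow> 'f. valid_linear_code W' (restr_receivers W' R D)
              (restr_map W' D) (restr_map W' S) 2 V2)
    \<and> \<not> (\<exists>a b. internal_conflict W' (restr_receivers W' R D) (restr_map W' D) (restr_map W' S) a b)"
proof -
  note ic = assms(1) and val = assms(2)
  let ?R' = "restr_receivers W' R D" and ?D' = "restr_map W' D" and ?S' = "restr_map W' S"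
  have fin: "finite W" using ic unfolding ic_problem_def by auto
  obtain T0 where T0: "triangular_interfering W R D S T0"
    and C: "C = {T. (T0, T) \<in> (tri_adj W R D S)\<^sup>*}"
    using assms(3) unfolding type2_alignment_set_def by blast
  obtain p q where pq: "p \<in> T0" "q \<in> T0" "in_conflict W R D S p q"
    using T0 unfolding triangular_interfering_def by blast
  define n where "n = cr (V p) (V q)"
  obtain m where m: "m < 3" "n m \<noteq> 0" using conf3[OF ic val pq(3)] unfolding n_def by blast
  have triT: "\<exists>c. c \<noteq> a \<and> c \<noteq> b \<and> T = {a,b,c} \<and> dot3 (cr (V a) (V b)) (V c) = 0"
    if T: "triangular_interfering W R D S T" and ab: "a \<in> T" "b \<in> T" "in_conflict W R D S a b"
    for T a b
  proof -
    have ab': "a \<noteq> b" using ab(3) unfolding in_conflict_def by simp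
    obtain j k where jk: "j \<in> R" "k \<in> D j - T" "T \<subseteq> interf W D S j k" and c3: "card T = 3"
      using T unfolding triangular_interfering_def by blast
    obtain c where c: "c \<noteq> a" "c \<noteq> b" "T = {a,b,c}" using card3E[OF c3 ab(1,2) ab'] by blast
    have "dot3 (cr (V a) (V b)) (V c) = 0"
      by (rule tri3[OF ic val, where j=j and k=k]) (use jk c ab' in auto)
    thus ?thesis using c by blast
  qed
  have inv: "triangular_interfering W R D S T \<and> (\<forall>x\<in>T. dot3 n (V x) = 0)"
    if "(T0, T) \<in> (tri_adj W R D S)\<^sup>*" for T
    using that
  proof (induction rule: rtrancl_induct)
    case base
    obtain c where c: "T0 = {p,q,c}" "dot3 (cr (V p) (V q)) (V c) = 0" using triT[OF T0 pq] by blast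
    have "dot3 n (V p) = 0" "dot3 n (V q) = 0" by (simp_all add: n_def dot3_def cr_def algebra_simps)
    then show ?case using T0 c by (auto simp: n_def)
  next
    case (step T1 T2)
    from step(2) have t2: "triangular_interfering W R D S T2"
      and "\<exists>a b. T1 \<inter> T2 = {a,b} \<and> in_conflict W R D S a b" unfolding tri_adj_def by auto
    then obtain a b where ab: "T1 \<inter> T2 = {a,b}" "in_conflict W R D S a b" by blast
    have aT: "a \<in> T1" "b \<in> T1" "a \<in> T2" "b \<in> T2" using ab(1) by auto
    obtain c where c: "T2 = {a,b,c}" "dot3 (cr (V a) (V b)) (V c) = 0"
      using triT[OF t2 aT(3,4) ab(2)] by blast
    have na: "dot3 n (V a) = 0" "dot3 n (V b) = 0" using step(3) aT by auto
    obtain m' where "m' < 3" "cr (V a) (V b) m' \<noteq> 0" using conf3[OF ic val ab(2)] by blast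
    have "dot3 n (V c) = 0" by (rule lemD[OF na c(2)]) fact
    then show ?case using t2 c na by auto
  qed
  have Csub: "\<forall>T\<in>C. T \<subseteq> W \<and> (\<forall>x\<in>T. dot3 n (V x) = 0)"
    using inv unfolding C triangular_interfering_def by auto
  have W'W: "W' \<subseteq> W" using Csub assms(4) by auto
  have finW': "finite W'" using fin W'W finite_subset by blast
  have orth: "\<forall>x\<in>W'. dot3 n (V x) = 0" using Csub assms(4) by auto
  define V2 where "V2 = (\<lambda>x l. V x ((m + 1 + l) mod 3))"
  have val2: "valid_linear_code W' ?R' ?D' ?S' 2 V2"
  proof (rule valid_intro[OF finW'], intro ballI allI impI)
    fix j k w assume j: "j \<in> ?R'" and k: "k \<in> ?D' j" and wS: "\<forall>i\<in>?S' j. w i = 0"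
      and ws: "\<forall>l<2. (\<Sum>i\<in>W'. w i * V2 i l) = 0"
    have jR: "j \<in> R" using j unfolding restr_receivers_def by auto
    have kk: "k \<in> D j" "k \<in> W'" using k unfolding restr_map_def by auto
    define w' where "w' = (\<lambda>i. if i \<in> W' then w i else 0)"
    define s where "s = (\<lambda>l. \<Sum>i\<in>W'. w i * V i l)"
    have sW: "(\<Sum>i\<in>W. w' i * V i l) = s l" for l
    proof -
      have "(\<Sum>i\<in>W. w' i * V i l) = (\<Sum>i\<in>W. if i \<in> W' then w i * V i l else 0)"
        by (rule sum.cong) (auto simp: w'_def)
      also have "\<dots> = (\<Sum>i\<in>W \<inter> W'. w i * V i l)" using sum.inter_restrict[OF fin, of "\<lambda>i. w i * V i l" W'] by simp
      also have "W \<inter> W' = W'" using W'W by auto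
      finally show ?thesis by (simp add: s_def)
    qed
    have s1: "s ((m+1) mod 3) = 0" using ws[rule_format, of 0] by (simp add: s_def V2_def)
    have s2: "s ((m+2) mod 3) = 0" using ws[rule_format, of 1]
      by (simp add: s_def V2_def add.assoc)
    have ds: "dot3 n s = (\<Sum>i\<in>W'. w i * dot3 n (V i))"
      by (simp add: dot3_def s_def sum_distrib_left sum.distrib algebra_simps)
    have "(\<Sum>i\<in>W'. w i * dot3 n (V i)) = (\<Sum>i\<in>W'. 0)"
      by (rule sum.cong) (use orth in auto)
    hence d0: "n 0 * s 0 + n 1 * s 1 + n 2 * s 2 = 0" using ds by (simp add: dot3_def)
    have "m = 0 \<or> m = 1 \<or> m = 2" using m by auto
    hence all: "s 0 = 0 \<and> s 1 = 0 \<and> s 2 = 0" using s1 s2 d0 m(2) by (auto simp: numeral_2_eq_2)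
    have "w' k = 0"
    proof (rule dec[OF val jR kk(1)])
      show "\<forall>i\<in>S j. w' i = 0" using wS by (auto simp: w'_def restr_map_def)
      show "\<forall>l<3. (\<Sum>i\<in>W. w' i * V i l) = 0" using all unfolding sW all3 by simp
    qed
    thus "w k = 0" using kk by (simp add: w'_def)
  qed
  have DS: "\<forall>j\<in>?R'. ?D' j \<subseteq> W' \<and> ?D' j \<inter> ?S' j = {}"
    using ic unfolding ic_problem_def restr_receivers_def restr_map_def by auto
  have dem: "\<forall>x\<in>W'. \<exists>j\<in>?R'. x \<in> ?D' j"
  proof
    fix x assume x: "x \<in> W'"
    then obtain j where "j \<in> R" "x \<in> D j" using ic W'W unfolding ic_problem_def by blast
    thus "\<exists>j\<in>?R'. x \<in> ?D' j" using x unfolding restr_receivers_def restr_map_def by blast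
  qed
  have nic: "\<not> (\<exists>a b. internal_conflict W' ?R' ?D' ?S' a b)"
    using no_ic[OF finW' val2 DS dem] by blast
  show ?thesis using val2 nic by blast
qed

end
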